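(* Let $\theta_T=\sqrt{4T^{-1}\log\mu(V)}$. For any nonempty starting set $S_0\subseteq V$, any integer $T\geq 1$ and any constant $c>0$, the volume-biased evolving set process $(S_t)$ started from $S_0$ satisfies \[ \widehat{\mathbf P}_{S_0}\Big[\min_{0\le j<T}\phi(S_j)\leq \sqrt{c}\,\theta_T\Big] \geq 1-\frac1c. \]
   Context: Let $G=(V,E)$ be a finite simple undirected graph in which every vertex has positive degree $d(x)$. For $S\subseteq V$, $\mu(S)=\sum_{x\in S}d(x)$, $\partial(S)$ is the number of edges with exactly one endpoint in $S$, and $\phi(S)=\partial(S)/\mu(S)$. $\log$ is the natural logarithm. The lazy random walk has transition kernel $p(x,y)=1/(2d(x))$ if $\{x,y\}\in E$, $p(x,x)=1/2$, and $0$ otherwise; $p(x,S)=\sum_{y\in S}p(x,y)$. The evolving set process (ESP): from state $S$, pick $U$ uniform on $[0,1]$ and move to $\{y: p(y,S)\geq U\}$; $K(S,S')$ denotes its transition kernel. The volume-biased ESP is the Markov chain on nonempty subsets with kernel $\widehat K(S,S')=\frac{\mu(S')}{\mu(S)}K(S,S')$; $\widehat{\mathbf P}_{S_0}$ denotes its law started at $S_0$. *)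

theory Defs
  imports "HOL-Analysis.Analysis"
begin

definition simple_graph :: "'a set \<Rightarrow> ('a \<Rightarrow> 'a \<Rightarrow> bool) \<Rightarrow> bool" where
  "simple_graph V E \<longleftrightarrow> finite V \<and> (\<forall>x y. E x y \<longrightarrow> x \<in> V \<and> y \<in> V)
     \<and> (\<forall>x y. E x y \<longrightarrow> E y x) \<and> (\<forall>x. \<not> E x x)"

definition deg :: "'a set \<Rightarrow> ('a \<Rightarrow> 'a \<Rightarrow> bool) \<Rightarrow> 'a \<Rightarrow> nat" where
  "deg V E x = card {y \<in> V. E x y}"

definition vol :: "'a set \<Rightarrow> ('a \<Rightarrow> 'a \<Rightarrow> bool) \<Rightarrow> 'a set \<Rightarrow> real" where
  "vol V E S = (\<Sum>x\<in>S. real (deg V E x))"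

definition bdry :: "'a set \<Rightarrow> ('a \<Rightarrow> 'a \<Rightarrow> bool) \<Rightarrow> 'a set \<Rightarrow> real" where
  "bdry V E S = real (card {(x, y). x \<in> S \<and> y \<in> V - S \<and> E x y})"

definition cond :: "'a set \<Rightarrow> ('a \<Rightarrow> 'a \<Rightarrow> bool) \<Rightarrow> 'a set \<Rightarrow> real" where
  "cond V E S = bdry V E S / vol V E S"

definition lazy_p :: "'a set \<Rightarrow> ('a \<Rightarrow> 'a \<Rightarrow> bool) \<Rightarrow> 'a \<Rightarrow> 'a \<Rightarrow> real" where
  "lazy_p V E x y = (if E x y then 1 / (2 * real (deg V E x)) else if x = y then 1/2 else 0)"

definition lazy_pS :: "'a set \<Rightarrow> ('a \<Rightarrow> 'a \<Rightarrow> bool) \<Rightarrow> 'a \<Rightarrow> 'a set \<Rightarrow> real" where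
  "lazy_pS V E x S = (\<Sum>y\<in>S. lazy_p V E x y)"

text \<open>Evolving set process kernel: K(S,S') = P[{y. p(y,S) \<ge> U} = S'], U uniform on [0,1].\<close>
definition esp_K :: "'a set \<Rightarrow> ('a \<Rightarrow> 'a \<Rightarrow> bool) \<Rightarrow> 'a set \<Rightarrow> 'a set \<Rightarrow> real" where
  "esp_K V E S S' = measure lborel {u \<in> {0..1::real}. {y \<in> V. lazy_pS V E y S \<ge> u} = S'}"

definition esp_Khat :: "'a set \<Rightarrow> ('a \<Rightarrow> 'a \<Rightarrow> bool) \<Rightarrow> 'a set \<Rightarrow> 'a set \<Rightarrow> real" where
  "esp_Khat V E S S' = vol V E S' / vol V E S * esp_K V E S S'"

fun path_weight :: "('s \<Rightarrow> 's \<Rightarrow> real) \<Rightarrow> 's list \<Rightarrow> real" where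
  "path_weight k (x # y # rest) = k x y * path_weight k (y # rest)"
| "path_weight k _ = 1"

text \<open>Probability, under the volume-biased ESP started at S0, of an event P depending on
  the first T states (S_0, ..., S_{T-1}) (for T \<ge> 1), given by summing over all paths.\<close>
definition vbesp_prob :: "'a set \<Rightarrow> ('a \<Rightarrow> 'a \<Rightarrow> bool) \<Rightarrow> 'a set \<Rightarrow> nat \<Rightarrow> ('a set list \<Rightarrow> bool) \<Rightarrow> real" where
  "vbesp_prob V E S0 T P =
     (\<Sum>xs\<in>{xs. set xs \<subseteq> Pow V \<and> length xs = T - 1}.
        if P (S0 # xs) then path_weight (esp_Khat V E) (S0 # xs) else 0)"

end

theory Submission
  imports Defs
begin


definition Aset :: "'a set \<Rightarrow> ('a \<Rightarrow> real) \<Rightarrow> 'a set \<Rightarrow> real set" where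
  "Aset V p S' = {u \<in> {0..1::real}. {y \<in> V. p y \<ge> u} = S'}"

lemma Aset_sets:
  assumes "finite V" "J \<in> sets lborel"
  shows "Aset V p S' \<inter> J \<in> sets lborel"
proof (cases "S' \<subseteq> V")
  case True
  have "Aset V p S' \<inter> J = {u \<in> space borel. u \<in> {0..1} \<and> (\<forall>y\<in>V. (u \<le> p y) = (y \<in> S')) \<and> u \<in> J}"
    using True unfolding Aset_def by auto
  also have "\<dots> \<in> sets borel" using assms by measurable
  finally show ?thesis by simp
next
  case False
  then have "Aset V p S' = {}" unfolding Aset_def by auto
  then show ?thesis by simp
qed

lemma Aset_fin: "emeasure lborel (Aset V p S' \<inter> J) \<noteq> \<infinity>"
proof -
  have "emeasure lborel (Aset V p S' \<inter> J) \<le> emeasure lborel {0..1::real}"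
    by (rule emeasure_mono) (auto simp: Aset_def)
  then show ?thesis by (auto simp: top_unique)
qed

lemma Aset_sum:
  assumes "finite V" "J \<in> sets lborel" "D \<subseteq> Pow V"
  shows "(\<Sum>S'\<in>D. measure lborel (Aset V p S' \<inter> J)) = measure lborel {u\<in>J \<inter> {0..1}. {y\<in>V. p y \<ge> u} \<in> D}"
proof -
  have fD: "finite D" using assms by (meson finite_Pow_iff finite_subset)
  have "{u\<in>J \<inter> {0..1}. {y\<in>V. p y \<ge> u} \<in> D} = (\<Union>S'\<in>D. Aset V p S' \<inter> J)"
    unfolding Aset_def by auto
  moreover have "measure lborel (\<Union>S'\<in>D. Aset V p S' \<inter> J) = (\<Sum>S'\<in>D. measure lborel (Aset V p S' \<inter> J))"
    apply (rule measure_finite_Union[OF fD])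
    using Aset_sets[OF assms(1,2)] apply blast
     apply (auto simp: disjoint_family_on_def Aset_def)[1]
    using Aset_fin by blast
  ultimately show ?thesis by simp
qed

lemma Aset_total:
  assumes "finite V" "J \<in> sets lborel"
  shows "(\<Sum>S'\<in>Pow V. measure lborel (Aset V p S' \<inter> J)) = measure lborel (J \<inter> {0..1})"
  using Aset_sum[OF assms, of "Pow V" p] by (auto intro!: arg_cong[where f="measure lborel"])

lemma Aset_lin:
  assumes "finite V" "J \<in> sets lborel"
  shows "(\<Sum>S'\<in>Pow V. (\<Sum>y\<in>S'. w y) * measure lborel (Aset V p S' \<inter> J))
       = (\<Sum>y\<in>V. w y * measure lborel {u\<in>J \<inter> {0..1}. u \<le> p y})"
proof -
  have "(\<Sum>S'\<in>Pow V. (\<Sum>y\<in>S'. w y) * measure lborel (Aset V p S' \<inter> J))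
      = (\<Sum>S'\<in>Pow V. \<Sum>y\<in>V. (if y \<in> S' then w y * measure lborel (Aset V p S' \<inter> J) else 0))"
  proof (rule sum.cong[OF refl])
    fix S' assume "S' \<in> Pow V"
    then have "S' = {y\<in>V. y \<in> S'}" by auto
    then show "(\<Sum>y\<in>S'. w y) * measure lborel (Aset V p S' \<inter> J) = (\<Sum>y\<in>V. (if y \<in> S' then w y * measure lborel (Aset V p S' \<inter> J) else 0))"
      using assms(1) by (simp add: sum.inter_filter[symmetric] sum_distrib_right)
  qed
  also have "\<dots> = (\<Sum>y\<in>V. \<Sum>S'\<in>Pow V. (if y \<in> S' then w y * measure lborel (Aset V p S' \<inter> J) else 0))"
    by (rule sum.swap)
  also have "\<dots> = (\<Sum>y\<in>V. w y * (\<Sum>S'\<in>{S'\<in>Pow V. y \<in> S'}. measure lborel (Aset V p S' \<inter> J)))"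
    using assms(1) by (simp add: sum.inter_filter[symmetric] sum_distrib_left)
  also have "\<dots> = (\<Sum>y\<in>V. w y * measure lborel {u\<in>J \<inter> {0..1}. u \<le> p y})"
  proof (rule sum.cong[OF refl])
    fix y assume y: "y \<in> V"
    have "(\<Sum>S'\<in>{S'\<in>Pow V. y \<in> S'}. measure lborel (Aset V p S' \<inter> J)) = measure lborel {u\<in>J \<inter> {0..1}. {y\<in>V. p y \<ge> u} \<in> {S'\<in>Pow V. y \<in> S'}}"
      by (rule Aset_sum[OF assms]) auto
    also have "{u\<in>J \<inter> {0..1}. {y\<in>V. p y \<ge> u} \<in> {S'\<in>Pow V. y \<in> S'}} = {u\<in>J \<inter> {0..1}. u \<le> p y}"
      using y by auto
    finally show "w y * (\<Sum>S'\<in>{S'\<in>Pow V. y \<in> S'}. measure lborel (Aset V p S' \<inter> J)) = w y * measure lborel {u\<in>J \<inter> {0..1}. u \<le> p y}"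
      by simp
  qed
  finally show ?thesis .
qed

lemma meas_full: "0 \<le> (q::real) \<Longrightarrow> q \<le> 1 \<Longrightarrow> measure lborel {u\<in>UNIV \<inter> {0..1}. u \<le> q} = q"
proof -
  assume "0 \<le> q" "q \<le> 1"
  then have "{u\<in>UNIV \<inter> {0..1}. u \<le> q} = {0..q}" by auto
  then show ?thesis using \<open>0 \<le> q\<close> by simp
qed

lemma meas_L: "0 \<le> (q::real) \<Longrightarrow> measure lborel {u\<in>{0..1/2} \<inter> {0..1}. u \<le> q} = min q (1/2)"
proof -
  assume "0 \<le> q"
  then have "{u\<in>{0..1/2} \<inter> {0..1}. u \<le> q} = {0..min q (1/2)}" by auto
  then show ?thesis using \<open>0 \<le> q\<close> by simp
qed

lemma meas_R: "(q::real) \<le> 1 \<Longrightarrow> measure lborel {u\<in>{1/2<..} \<inter> {0..1}. u \<le> q} = max (q - 1/2) 0"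
proof -
  assume "q \<le> 1"
  then have e: "{u\<in>{1/2<..} \<inter> {0..1}. u \<le> q} = {1/2<..q}" by auto
  show ?thesis
  proof (cases "1/2 \<le> q")
    case True
    then show ?thesis unfolding e using measure_lborel_Ioc[OF True] by simp
  next
    case False
    then have "{1/2<..q} = {}" by auto
    then show ?thesis unfolding e using False by simp
  qed
qed

lemma Aset_split: "finite V \<Longrightarrow> measure lborel (Aset V p S') = measure lborel (Aset V p S' \<inter> {0..1/2}) + measure lborel (Aset V p S' \<inter> {1/2<..})"
proof -
  assume fV: "finite V"
  have "Aset V p S' = (Aset V p S' \<inter> {0..1/2}) \<union> (Aset V p S' \<inter> {1/2<..})"
    unfolding Aset_def by auto
  moreover have "measure lborel ((Aset V p S' \<inter> {0..1/2}) \<union> (Aset V p S' \<inter> {1/2<..}))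
     = measure lborel (Aset V p S' \<inter> {0..1/2}) + measure lborel (Aset V p S' \<inter> {1/2<..})"
    by (rule measure_Union[OF Aset_fin Aset_fin Aset_sets[OF fV] Aset_sets[OF fV]]) auto
  ultimately show ?thesis by simp
qed

lemma sqrt_amgm: "0 \<le> (x::real) \<Longrightarrow> 0 < a \<Longrightarrow> sqrt x \<le> (x / a + a) / 2"
proof -
  assume x: "0 \<le> x" and a: "0 < a"
  have "0 \<le> (sqrt x - a)^2" by simp
  then have "2 * a * sqrt x \<le> x + a^2" using x by (simp add: power2_eq_square algebra_simps)
  then show ?thesis using a by (simp add: field_simps power2_eq_square)
qed


lemma half_bound:
  assumes fV: "finite V" and J: "J \<in> sets lborel" and a: "0 < a" and w: "\<And>y. y \<in> V \<Longrightarrow> 0 \<le> w y"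
  shows "(\<Sum>S'\<in>Pow V. measure lborel (Aset V p S' \<inter> J) * sqrt (\<Sum>y\<in>S'. w y))
     \<le> (\<Sum>y\<in>V. w y * measure lborel {u\<in>J \<inter> {0..1}. u \<le> p y}) / (2*a) + a/2 * measure lborel (J \<inter> {0..1})"
proof -
  have "(\<Sum>S'\<in>Pow V. measure lborel (Aset V p S' \<inter> J) * sqrt (\<Sum>y\<in>S'. w y))
      \<le> (\<Sum>S'\<in>Pow V. measure lborel (Aset V p S' \<inter> J) * (((\<Sum>y\<in>S'. w y) / a + a) / 2))"
  proof (rule sum_mono)
    fix S' assume "S' \<in> Pow V"
    then have "0 \<le> (\<Sum>y\<in>S'. w y)" using w by (auto intro: sum_nonneg)
    then show "measure lborel (Aset V p S' \<inter> J) * sqrt (\<Sum>y\<in>S'. w y) \<le> measure lborel (Aset V p S' \<inter> J) * (((\<Sum>y\<in>S'. w y) / a + a) / 2)"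
      by (intro mult_left_mono sqrt_amgm a) auto
  qed
  also have "\<dots> = (\<Sum>S'\<in>Pow V. (\<Sum>y\<in>S'. w y) * measure lborel (Aset V p S' \<inter> J) / (2*a) + a/2 * measure lborel (Aset V p S' \<inter> J))"
    by (rule sum.cong) (use a in \<open>auto simp: field_simps\<close>)
  also have "\<dots> = (\<Sum>S'\<in>Pow V. (\<Sum>y\<in>S'. w y) * measure lborel (Aset V p S' \<inter> J)) / (2*a) + a/2 * (\<Sum>S'\<in>Pow V. measure lborel (Aset V p S' \<inter> J))"
    by (simp add: sum.distrib sum_divide_distrib[symmetric] sum_distrib_left)
  also have "\<dots> = (\<Sum>y\<in>V. w y * measure lborel {u\<in>J \<inter> {0..1}. u \<le> p y}) / (2*a) + a/2 * measure lborel (J \<inter> {0..1})"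
    by (simp add: Aset_lin[OF fV J] Aset_total[OF fV J])
  finally show ?thesis .
qed

lemma esp_generic:
  assumes fV: "finite V" and p: "\<And>y. y \<in> V \<Longrightarrow> 0 \<le> p y \<and> p y \<le> 1"
    and w: "\<And>y. y \<in> V \<Longrightarrow> 0 \<le> w y"
  shows "(\<Sum>S'\<in>Pow V. measure lborel (Aset V p S')) = 1"
    and "(\<Sum>S'\<in>Pow V. (\<Sum>y\<in>S'. w y) * measure lborel (Aset V p S')) = (\<Sum>y\<in>V. w y * p y)"
    and "0 < a1 \<Longrightarrow> 0 < a2 \<Longrightarrow> (\<Sum>S'\<in>Pow V. measure lborel (Aset V p S') * sqrt (\<Sum>y\<in>S'. w y))
          \<le> (\<Sum>y\<in>V. w y * min (p y) (1/2)) / (2*a1) + a1/4 + (\<Sum>y\<in>V. w y * max (p y - 1/2) 0) / (2*a2) + a2/4"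
proof -
  show "(\<Sum>S'\<in>Pow V. measure lborel (Aset V p S')) = 1"
    using Aset_total[OF fV, of UNIV p] by simp
  show "(\<Sum>S'\<in>Pow V. (\<Sum>y\<in>S'. w y) * measure lborel (Aset V p S')) = (\<Sum>y\<in>V. w y * p y)"
    using Aset_lin[OF fV, of UNIV w p] p meas_full by (simp cong: sum.cong)
  assume a1: "0 < a1" and a2: "0 < a2"
  have "(\<Sum>S'\<in>Pow V. measure lborel (Aset V p S') * sqrt (\<Sum>y\<in>S'. w y))
     = (\<Sum>S'\<in>Pow V. measure lborel (Aset V p S' \<inter> {0..1/2}) * sqrt (\<Sum>y\<in>S'. w y))
      + (\<Sum>S'\<in>Pow V. measure lborel (Aset V p S' \<inter> {1/2<..}) * sqrt (\<Sum>y\<in>S'. w y))"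
    by (simp add: Aset_split[OF fV] sum.distrib[symmetric] distrib_right)
  also have "\<dots> \<le> ((\<Sum>y\<in>V. w y * measure lborel {u\<in>{0..1/2} \<inter> {0..1}. u \<le> p y}) / (2*a1) + a1/2 * measure lborel ({0..1/2::real} \<inter> {0..1}))
      + ((\<Sum>y\<in>V. w y * measure lborel {u\<in>{1/2<..} \<inter> {0..1}. u \<le> p y}) / (2*a2) + a2/2 * measure lborel ({(1/2::real)<..} \<inter> {0..1}))"
    by (intro add_mono half_bound fV a1 a2 w) auto
  also have "\<dots> = (\<Sum>y\<in>V. w y * min (p y) (1/2)) / (2*a1) + a1/4 + (\<Sum>y\<in>V. w y * max (p y - 1/2) 0) / (2*a2) + a2/4"
  proof -
    have e1: "{0..1/2::real} \<inter> {0..1} = {0..1/2}" "{(1/2::real)<..} \<inter> {0..1} = {1/2<..1}" by auto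
    have "(\<Sum>y\<in>V. w y * measure lborel {u\<in>{0..1/2} \<inter> {0..1}. u \<le> p y}) = (\<Sum>y\<in>V. w y * min (p y) (1/2))"
      using p meas_L by (simp cong: sum.cong)
    moreover have "(\<Sum>y\<in>V. w y * measure lborel {u\<in>{1/2<..} \<inter> {0..1}. u \<le> p y}) = (\<Sum>y\<in>V. w y * max (p y - 1/2) 0)"
      using p meas_R by (simp cong: sum.cong)
    ultimately show ?thesis unfolding e1 by simp
  qed
  finally show "(\<Sum>S'\<in>Pow V. measure lborel (Aset V p S') * sqrt (\<Sum>y\<in>S'. w y))
          \<le> (\<Sum>y\<in>V. w y * min (p y) (1/2)) / (2*a1) + a1/4 + (\<Sum>y\<in>V. w y * max (p y - 1/2) 0) / (2*a2) + a2/4" .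
qed



lemma card_ind: "finite A \<Longrightarrow> real (card {y\<in>A. P y}) = (\<Sum>y\<in>A. if P y then 1 else 0)"
  by (simp add: sum.inter_filter[symmetric])

lemma alg0: "0 \<le> (f::real) \<Longrightarrow> f \<le> 1 \<Longrightarrow> (1+f)/(4*(1+f/2)) + (1-f)/(4*(1-f/2)) + 1/2 \<le> 1 - f^2/8"
proof -
  assume f: "0 \<le> f" "f \<le> 1"
  have e: "(1+f)/(4*(1+f/2)) + (1-f)/(4*(1-f/2)) + 1/2 = 1 - f^2/(8 - 2*f^2)"
  proof -
    have q: "f*f \<le> 1" using f by (simp add: mult_le_one)
    have "8 - 2*f*f \<noteq> 0" "4 - f*f \<noteq> 0" "2 + f \<noteq> 0" "2 - f \<noteq> 0" using q f by auto
    then show ?thesis by (simp add: field_simps power2_eq_square)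
  qed
  have "f^2/8 \<le> f^2/(8 - 2*f^2)"
  proof -
    have q: "f*f \<le> 1" using f by (simp add: mult_le_one)
    then show ?thesis using f by (intro divide_left_mono) (auto simp: power2_eq_square)
  qed
  then show ?thesis unfolding e by simp
qed

context
  fixes V :: "'a set" and E :: "'a \<Rightarrow> 'a \<Rightarrow> bool"
  assumes G: "simple_graph V E" and Dp: "\<forall>x\<in>V. deg V E x > 0"
begin

definition ind :: "'a \<Rightarrow> 'a \<Rightarrow> real" where "ind x y = (if E x y then 1 else 0)"

lemma fV: "finite V" using G by (simp add: simple_graph_def)
lemma Esym: "E x y \<Longrightarrow> E y x" using G by (simp add: simple_graph_def)
lemma EV: "E x y \<Longrightarrow> x \<in> V \<and> y \<in> V" using G by (simp add: simple_graph_def)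
lemma Eirr: "\<not> E x x" using G by (simp add: simple_graph_def)
lemma ind_sym: "ind x y = ind y x" unfolding ind_def using Esym by auto
lemma ind_nn: "0 \<le> ind x y" unfolding ind_def by auto

lemma deg_sum: "real (deg V E x) = (\<Sum>z\<in>V. ind x z)"
  unfolding deg_def ind_def using fV by (simp add: card_ind)

lemma nS_le: "S \<subseteq> V \<Longrightarrow> (\<Sum>z\<in>S. ind x z) \<le> real (deg V E x)"
  unfolding deg_sum using fV by (intro sum_mono2) (auto simp: ind_nn)

lemma lazy_p_eq: "lazy_p V E x y = ind x y / (2 * real (deg V E x)) + (if x = y then 1/2 else 0)"
  unfolding lazy_p_def ind_def using Eirr by auto

lemma pS_eq: "S \<subseteq> V \<Longrightarrow> lazy_pS V E x S = (\<Sum>y\<in>S. ind x y) / (2 * real (deg V E x)) + (if x \<in> S then 1/2 else 0)"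
proof -
  assume S: "S \<subseteq> V"
  then have fS: "finite S" using fV finite_subset by auto
  show ?thesis
    unfolding lazy_pS_def lazy_p_eq using fS
    by (simp add: sum.distrib sum_divide_distrib[symmetric] sum.delta)
qed

lemma bdry_sum: "S \<subseteq> V \<Longrightarrow> bdry V E S = (\<Sum>x\<in>S. \<Sum>y\<in>V-S. ind x y)"
proof -
  assume S: "S \<subseteq> V"
  then have fS: "finite S" using fV finite_subset by auto
  have "{(x, y). x \<in> S \<and> y \<in> V - S \<and> E x y} = Sigma S (\<lambda>x. {y\<in>V-S. E x y})" by auto
  then have "bdry V E S = real (\<Sum>x\<in>S. card {y\<in>V-S. E x y})"
    unfolding bdry_def using fS fV by simp
  also have "\<dots> = (\<Sum>x\<in>S. \<Sum>y\<in>V-S. ind x y)"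
    unfolding of_nat_sum ind_def by (intro sum.cong refl card_ind) (use fV in auto)
  finally show ?thesis .
qed

lemma vol_sum: "vol V E S = (\<Sum>x\<in>S. \<Sum>y\<in>V. ind x y)"
  unfolding vol_def deg_sum ..

lemma pS_range: "S \<subseteq> V \<Longrightarrow> x \<in> V \<Longrightarrow> 0 \<le> lazy_pS V E x S \<and> lazy_pS V E x S \<le> 1"
proof -
  assume S: "S \<subseteq> V" and x: "x \<in> V"
  have d: "real (deg V E x) > 0" using Dp x by auto
  have n0: "0 \<le> (\<Sum>y\<in>S. ind x y)" by (simp add: sum_nonneg ind_nn)
  have n1: "(\<Sum>y\<in>S. ind x y) \<le> real (deg V E x)" using nS_le[OF S] .
  then have "(\<Sum>y\<in>S. ind x y) / (2 * real (deg V E x)) \<le> 1/2" using d by (simp add: field_simps)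
  moreover have "0 \<le> (\<Sum>y\<in>S. ind x y) / (2 * real (deg V E x))" using n0 d by simp
  ultimately show ?thesis unfolding pS_eq[OF S] by auto
qed

lemma M1_eq: "S \<subseteq> V \<Longrightarrow> (\<Sum>y\<in>V. real (deg V E y) * min (lazy_pS V E y S) (1/2)) = (vol V E S + bdry V E S) / 2"
proof -
  assume S: "S \<subseteq> V"
  have fS: "finite S" using S fV finite_subset by auto
  have "(\<Sum>y\<in>V. real (deg V E y) * min (lazy_pS V E y S) (1/2))
     = (\<Sum>y\<in>V. if y \<in> S then real (deg V E y) / 2 else (\<Sum>x\<in>S. ind y x) / 2)"
  proof (rule sum.cong[OF refl])
    fix y assume y: "y \<in> V"
    have d: "real (deg V E y) > 0" using Dp y by auto
    have "(\<Sum>z\<in>S. ind y z) / (2 * real (deg V E y)) \<le> 1/2" using nS_le[OF S, of y] d by (simp add: field_simps)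
    moreover have "0 \<le> (\<Sum>z\<in>S. ind y z)" by (simp add: sum_nonneg ind_nn)
    ultimately show "real (deg V E y) * min (lazy_pS V E y S) (1/2) = (if y \<in> S then real (deg V E y) / 2 else (\<Sum>x\<in>S. ind y x) / 2)"
      unfolding pS_eq[OF S] using d by (auto simp: min_def field_simps)
  qed
  also have "\<dots> = (\<Sum>y\<in>S. real (deg V E y) / 2) + (\<Sum>y\<in>V-S. (\<Sum>x\<in>S. ind y x) / 2)"
    using S by (simp add: sum.If_cases[OF fV] Int_absorb1 Int_absorb2 Diff_eq)
  also have "(\<Sum>y\<in>V-S. (\<Sum>x\<in>S. ind y x) / 2) = bdry V E S / 2"
    unfolding bdry_sum[OF S] sum_divide_distrib[symmetric]
    by (subst sum.swap) (simp add: ind_sym)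
  finally show ?thesis unfolding vol_def by (simp add: sum_divide_distrib[symmetric])
qed

lemma M2_eq: "S \<subseteq> V \<Longrightarrow> (\<Sum>y\<in>V. real (deg V E y) * max (lazy_pS V E y S - 1/2) 0) = (vol V E S - bdry V E S) / 2"
proof -
  assume S: "S \<subseteq> V"
  have fS: "finite S" using S fV finite_subset by auto
  have "(\<Sum>y\<in>V. real (deg V E y) * max (lazy_pS V E y S - 1/2) 0)
     = (\<Sum>y\<in>V. if y \<in> S then (\<Sum>x\<in>S. ind y x) / 2 else 0)"
  proof (rule sum.cong[OF refl])
    fix y assume y: "y \<in> V"
    have d: "real (deg V E y) > 0" using Dp y by auto
    have "0 \<le> (\<Sum>z\<in>S. ind y z) / (2 * real (deg V E y))" using d by (simp add: sum_nonneg ind_nn)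
    moreover have "(\<Sum>z\<in>S. ind y z) \<le> real (deg V E y)" using nS_le[OF S] .
    ultimately show "real (deg V E y) * max (lazy_pS V E y S - 1/2) 0 = (if y \<in> S then (\<Sum>x\<in>S. ind y x) / 2 else 0)"
      unfolding pS_eq[OF S] using d by (auto simp: max_def field_simps)
  qed
  also have "\<dots> = (\<Sum>y\<in>S. (\<Sum>x\<in>S. ind y x) / 2)"
    using S fV by (simp add: sum.If_cases Int_absorb1)
  also have "\<dots> = (\<Sum>y\<in>S. (\<Sum>x\<in>V. ind y x) - (\<Sum>x\<in>V-S. ind y x)) / 2"
    using S fV by (simp add: sum_divide_distrib[symmetric] sum_diff[symmetric] Diff_Diff_Int Int_absorb1 fS)
  finally show ?thesis unfolding vol_sum bdry_sum[OF S] by (simp add: sum_subtractf)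
qed


lemma vol_nn: "0 \<le> vol V E S" unfolding vol_def by (simp add: sum_nonneg)

lemma vol_pos: "S \<subseteq> V \<Longrightarrow> S \<noteq> {} \<Longrightarrow> 0 < vol V E S"
proof -
  assume S: "S \<subseteq> V" "S \<noteq> {}"
  then have "finite S" using fV finite_subset by auto
  moreover have "\<forall>x\<in>S. 0 < real (deg V E x)"
  proof
    fix x assume "x \<in> S" then have "x \<in> V" using S by auto
    then show "0 < real (deg V E x)" using Dp by auto
  qed
  ultimately show ?thesis unfolding vol_def using S by (intro sum_pos) auto
qed

lemma vol_mono: "S \<subseteq> V \<Longrightarrow> vol V E S \<le> vol V E V"
  unfolding vol_def using fV by (intro sum_mono2) auto

lemma bdry_nn: "0 \<le> bdry V E S" unfolding bdry_def by simp

lemma bdry_le: "S \<subseteq> V \<Longrightarrow> bdry V E S \<le> vol V E S"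
  unfolding bdry_sum vol_sum using fV by (intro sum_mono sum_mono2) (auto simp: ind_nn)

lemma cond_range: "S \<subseteq> V \<Longrightarrow> S \<noteq> {} \<Longrightarrow> 0 \<le> cond V E S \<and> cond V E S \<le> 1"
  unfolding cond_def using vol_pos[of S] bdry_le[of S] bdry_nn[of S] by (simp add: divide_le_eq_1)

lemma K_eq: "esp_K V E S S' = measure lborel (Aset V (\<lambda>y. lazy_pS V E y S) S')"
  unfolding esp_K_def Aset_def ..

lemma K_nn: "0 \<le> esp_K V E S S'" unfolding esp_K_def by simp

lemma Khat_nn: "0 \<le> esp_Khat V E S S'"
  unfolding esp_Khat_def using vol_nn K_nn by simp

lemma Khat_empty: "esp_Khat V E S {} = 0"
  unfolding esp_Khat_def vol_def by simp

lemma volsum_K: "S \<subseteq> V \<Longrightarrow> (\<Sum>S'\<in>Pow V. vol V E S' * esp_K V E S S') = vol V E S"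
proof -
  assume S: "S \<subseteq> V"
  have "(\<Sum>S'\<in>Pow V. vol V E S' * esp_K V E S S') = (\<Sum>y\<in>V. real (deg V E y) * lazy_pS V E y S)"
    unfolding vol_def K_eq by (rule esp_generic(2)[OF fV]) (use pS_range[OF S] in auto)
  also have "\<dots> = (\<Sum>y\<in>V. real (deg V E y) * min (lazy_pS V E y S) (1/2)) + (\<Sum>y\<in>V. real (deg V E y) * max (lazy_pS V E y S - 1/2) 0)"
  proof -
    have "(\<Sum>y\<in>V. real (deg V E y) * lazy_pS V E y S) = (\<Sum>y\<in>V. real (deg V E y) * min (lazy_pS V E y S) (1/2) + real (deg V E y) * max (lazy_pS V E y S - 1/2) 0)"
      by (rule sum.cong) (auto simp: min_def max_def algebra_simps)
    then show ?thesis by (simp add: sum.distrib)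
  qed
  also have "\<dots> = vol V E S" unfolding M1_eq[OF S] M2_eq[OF S] by (simp add: field_simps)
  finally show ?thesis .
qed

lemma Khat_sum: "S \<subseteq> V \<Longrightarrow> S \<noteq> {} \<Longrightarrow> (\<Sum>S'\<in>Pow V. esp_Khat V E S S') = 1"
proof -
  assume S: "S \<subseteq> V" "S \<noteq> {}"
  have "(\<Sum>S'\<in>Pow V. esp_Khat V E S S') = (\<Sum>S'\<in>Pow V. vol V E S' * esp_K V E S S') / vol V E S"
    unfolding esp_Khat_def by (simp add: sum_divide_distrib)
  then show ?thesis using volsum_K[OF S(1)] vol_pos[OF S] by simp
qed

lemma sqrt_K: "S \<subseteq> V \<Longrightarrow> S \<noteq> {} \<Longrightarrow>
   (\<Sum>S'\<in>Pow V. esp_K V E S S' * sqrt (vol V E S')) \<le> sqrt (vol V E S) * (1 - (cond V E S)^2 / 8)"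
proof -
  assume S: "S \<subseteq> V" "S \<noteq> {}"
  define v where "v = vol V E S"
  define f where "f = cond V E S"
  define s where "s = sqrt v"
  have v: "0 < v" using vol_pos[OF S] unfolding v_def .
  have s: "0 < s" "s * s = v" using v unfolding s_def by auto
  have f: "0 \<le> f" "f \<le> 1" using cond_range[OF S] unfolding f_def by auto
  have b: "bdry V E S = f * v" unfolding f_def v_def cond_def using v v_def by simp
  have a1: "0 < s * (1 + f/2)" using s f by simp
  have a2: "0 < s * (1 - f/2)" using s f by simp
  have "(\<Sum>S'\<in>Pow V. esp_K V E S S' * sqrt (vol V E S'))
      \<le> (\<Sum>y\<in>V. real (deg V E y) * min (lazy_pS V E y S) (1/2)) / (2*(s * (1 + f/2))) + (s * (1 + f/2))/4
        + (\<Sum>y\<in>V. real (deg V E y) * max (lazy_pS V E y S - 1/2) 0) / (2*(s * (1 - f/2))) + (s * (1 - f/2))/4"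
    unfolding vol_def K_eq by (rule esp_generic(3)[OF fV _ _ a1 a2]) (use pS_range[OF S(1)] in auto)
  also have "\<dots> = s * ((1+f)/(4*(1+f/2)) + (1-f)/(4*(1-f/2)) + 1/2)"
  proof -
    have n1: "1 + f/2 \<noteq> 0" "1 - f/2 \<noteq> 0" using f by auto
    have n2: "0 < s * 8 + f * (s * 4)" using s(1) f by (simp add: add_pos_nonneg)
    have h1: "(v + f * v) / 2 / (2 * (s * (1 + f / 2))) = s * ((1+f)/(4*(1+f/2)))"
      unfolding s(2)[symmetric] using s(1) n1 n2 by (simp add: field_simps)
    have h2: "(v - f * v) / 2 / (2 * (s * (1 - f / 2))) = s * ((1-f)/(4*(1-f/2)))"
      unfolding s(2)[symmetric] using s(1) n1 n2 by (simp add: field_simps)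
    show ?thesis
      unfolding M1_eq[OF S(1)] M2_eq[OF S(1)] b v_def[symmetric] h1 h2 by (simp add: field_simps)
  qed
  also have "\<dots> \<le> s * (1 - f^2/8)"
    using alg0[OF f] s by simp
  finally show ?thesis unfolding s_def v_def f_def .
qed

lemma ln_step: "S \<subseteq> V \<Longrightarrow> S \<noteq> {} \<Longrightarrow>
   ln (vol V E S) + (cond V E S)^2 / 4 \<le> (\<Sum>S'\<in>Pow V. esp_Khat V E S S' * ln (vol V E S'))"
proof -
  assume S: "S \<subseteq> V" "S \<noteq> {}"
  define v where "v = vol V E S"
  have v: "0 < v" using vol_pos[OF S] unfolding v_def .
  have pt: "esp_Khat V E S S' * ln (vol V E S') \<ge>
      esp_Khat V E S S' * ln v + 2 * esp_Khat V E S S' - 2 * (esp_K V E S S' * sqrt (vol V E S')) / sqrt v"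
    if S': "S' \<in> Pow V" for S'
  proof (cases "S' = {}")
    case True
    then show ?thesis by (simp add: Khat_empty vol_def)
  next
    case False
    define w where "w = vol V E S'"
    have w: "0 < w" using vol_pos[OF _ False] S' unfolding w_def by auto
    define x where "x = sqrt (v / w)"
    have x: "0 < x" unfolding x_def using v w by simp
    have "ln x \<le> x - 1" using ln_le_minus_one[OF x] .
    moreover have "ln x = (ln v - ln w) / 2" unfolding x_def using v w by (simp add: ln_sqrt ln_div)
    ultimately have l: "ln w \<ge> ln v + 2 - 2 * x" by simp
    have kh: "esp_Khat V E S S' = w / v * esp_K V E S S'" unfolding esp_Khat_def w_def v_def ..
    have "w / v * x = sqrt w / sqrt v"
      unfolding x_def using v w by (simp add: real_sqrt_divide field_simps)
    moreover have "esp_Khat V E S S' * x = esp_K V E S S' * (w / v * x)" unfolding kh by simp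
    ultimately have e: "esp_Khat V E S S' * x = esp_K V E S S' * sqrt w / sqrt v" by simp
    have "esp_Khat V E S S' * ln w \<ge> esp_Khat V E S S' * (ln v + 2 - 2 * x)"
      by (rule mult_left_mono[OF l Khat_nn])
    moreover have "esp_Khat V E S S' * (ln v + 2 - 2 * x) = esp_Khat V E S S' * ln v + 2 * esp_Khat V E S S' - 2 * (esp_Khat V E S S' * x)"
      by (simp add: algebra_simps)
    ultimately show ?thesis unfolding w_def[symmetric] e by simp
  qed
  have "(\<Sum>S'\<in>Pow V. esp_Khat V E S S' * ln (vol V E S')) \<ge>
     (\<Sum>S'\<in>Pow V. esp_Khat V E S S' * ln v + 2 * esp_Khat V E S S' - 2 * (esp_K V E S S' * sqrt (vol V E S')) / sqrt v)"
    by (rule sum_mono) (rule pt)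
  also have "(\<Sum>S'\<in>Pow V. esp_Khat V E S S' * ln v + 2 * esp_Khat V E S S' - 2 * (esp_K V E S S' * sqrt (vol V E S')) / sqrt v)
     = ln v + 2 - 2 * (\<Sum>S'\<in>Pow V. esp_K V E S S' * sqrt (vol V E S')) / sqrt v"
    using Khat_sum[OF S]
    by (simp add: sum_subtractf sum.distrib sum_distrib_right[symmetric] sum_distrib_left[symmetric] sum_divide_distrib[symmetric])
  also have "\<dots> \<ge> ln v + 2 - 2 * (sqrt v * (1 - (cond V E S)^2 / 8)) / sqrt v"
  proof -
    have "(\<Sum>S'\<in>Pow V. esp_K V E S S' * sqrt (vol V E S')) / sqrt v \<le> sqrt v * (1 - (cond V E S)^2 / 8) / sqrt v"
      using sqrt_K[OF S] v unfolding v_def[symmetric] by (intro divide_right_mono) auto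
    then have q: "(\<Sum>S'\<in>Pow V. esp_K V E S S' * sqrt (vol V E S')) / sqrt v \<le> 1 - (cond V E S)^2 / 8" using v by simp
    have e1: "2 * (\<Sum>S'\<in>Pow V. esp_K V E S S' * sqrt (vol V E S')) / sqrt v = 2 * ((\<Sum>S'\<in>Pow V. esp_K V E S S' * sqrt (vol V E S')) / sqrt v)" by simp
    have e2: "2 * (sqrt v * (1 - (cond V E S)^2 / 8)) / sqrt v = 2 * (1 - (cond V E S)^2 / 8)" using v by simp
    show ?thesis unfolding e1 e2 using mult_left_mono[OF q, of 2] by simp
  qed
  also have "ln v + 2 - 2 * (sqrt v * (1 - (cond V E S)^2 / 8)) / sqrt v = ln v + (cond V E S)^2 / 4"
    using v by (simp add: field_simps)
  finally show ?thesis unfolding v_def .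
qed

lemma ln_top: "S \<subseteq> V \<Longrightarrow> S \<noteq> {} \<Longrightarrow> (\<Sum>S'\<in>Pow V. esp_Khat V E S S' * ln (vol V E S')) \<le> ln (vol V E V)"
proof -
  assume S: "S \<subseteq> V" "S \<noteq> {}"
  have "(\<Sum>S'\<in>Pow V. esp_Khat V E S S' * ln (vol V E S')) \<le> (\<Sum>S'\<in>Pow V. esp_Khat V E S S' * ln (vol V E V))"
  proof (rule sum_mono)
    fix S' assume S': "S' \<in> Pow V"
    show "esp_Khat V E S S' * ln (vol V E S') \<le> esp_Khat V E S S' * ln (vol V E V)"
    proof (cases "S' = {}")
      case True then show ?thesis by (simp add: Khat_empty)
    next
      case False
      then have "0 < vol V E S'" using vol_pos S' by auto
      then have "ln (vol V E S') \<le> ln (vol V E V)" using vol_mono[of S'] S' by (subst ln_le_cancel_iff) auto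
      then show ?thesis by (rule mult_left_mono[OF _ Khat_nn])
    qed
  qed
  also have "\<dots> = ln (vol V E V)" using Khat_sum[OF S] by (simp add: sum_distrib_right[symmetric])
  finally show ?thesis .
qed


definition paths :: "nat \<Rightarrow> 'a set list set" where
  "paths n = {xs. set xs \<subseteq> Pow V \<and> length xs = n}"

lemma paths_fin: "finite (paths n)"
  unfolding paths_def using fV by (simp add: finite_lists_length_eq)

lemma paths_0: "paths 0 = {[]}" unfolding paths_def by auto

lemma paths_Suc_sum: "(\<Sum>xs\<in>paths (Suc n). f xs) = (\<Sum>S'\<in>Pow V. \<Sum>ys\<in>paths n. f (S' # ys))"
proof -
  have im: "paths (Suc n) = (\<lambda>(a, ys). a # ys) ` (Pow V \<times> paths n)"
  proof (rule set_eqI)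
    fix xs show "xs \<in> paths (Suc n) \<longleftrightarrow> xs \<in> (\<lambda>(a, ys). a # ys) ` (Pow V \<times> paths n)"
      unfolding paths_def by (cases xs) (auto simp: image_iff)
  qed
  have inj: "inj_on (\<lambda>(a, ys). a # ys) (Pow V \<times> paths n)" by (auto simp: inj_on_def)
  have "(\<Sum>xs\<in>paths (Suc n). f xs) = (\<Sum>(a, ys)\<in>Pow V \<times> paths n. f (a # ys))"
    unfolding im by (subst sum.reindex[OF inj]) (simp add: case_prod_unfold)
  also have "\<dots> = (\<Sum>S'\<in>Pow V. \<Sum>ys\<in>paths n. f (S' # ys))"
    by (rule sum.cartesian_product[symmetric])
  finally show ?thesis .
qed

abbreviation pw where "pw \<equiv> path_weight (esp_Khat V E)"

lemma pw_nn: "0 \<le> pw xs"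
  by (induction "esp_Khat V E" xs rule: path_weight.induct) (auto simp: Khat_nn)

definition Wt :: "nat \<Rightarrow> 'a set \<Rightarrow> real" where
  "Wt n S = (\<Sum>xs\<in>paths n. pw (S # xs))"

lemma Wt_Suc: "Wt (Suc n) S = (\<Sum>S'\<in>Pow V. esp_Khat V E S S' * Wt n S')"
  unfolding Wt_def paths_Suc_sum by (simp add: sum_distrib_left)

lemma Wt_one: "S \<subseteq> V \<Longrightarrow> S \<noteq> {} \<Longrightarrow> Wt n S = 1"
proof (induction n arbitrary: S)
  case 0
  then show ?case unfolding Wt_def paths_0 by simp
next
  case (Suc n)
  have "Wt (Suc n) S = (\<Sum>S'\<in>Pow V. esp_Khat V E S S' * 1)"
    unfolding Wt_Suc
  proof (rule sum.cong[OF refl])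
    fix S' assume S': "S' \<in> Pow V"
    show "esp_Khat V E S S' * Wt n S' = esp_Khat V E S S' * 1"
      using Suc.IH[of S'] S' by (cases "S' = {}") (auto simp: Khat_empty)
  qed
  then show ?case using Khat_sum[OF Suc.prems] by simp
qed

definition Fp :: "nat \<Rightarrow> 'a set list \<Rightarrow> real" where
  "Fp n xs = (\<Sum>j<Suc n. (cond V E (xs ! j))^2)"

lemma Fp_Suc: "Fp (Suc n) (S # ys) = (cond V E S)^2 + Fp n ys"
  unfolding Fp_def by (subst sum.lessThan_Suc_shift) simp

lemma Fp_nn: "0 \<le> Fp n xs" unfolding Fp_def by (simp add: sum_nonneg)

definition Et :: "nat \<Rightarrow> 'a set \<Rightarrow> real" where
  "Et n S = (\<Sum>xs\<in>paths n. pw (S # xs) * Fp n (S # xs))"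

lemma Et_Suc: "Et (Suc n) S = (\<Sum>S'\<in>Pow V. esp_Khat V E S S' * ((cond V E S)^2 * Wt n S' + Et n S'))"
  unfolding Et_def Wt_def paths_Suc_sum Fp_Suc
  by (simp add: sum_distrib_left sum.distrib algebra_simps)

lemma Et_bound: "S \<subseteq> V \<Longrightarrow> S \<noteq> {} \<Longrightarrow> Et n S \<le> 4 * (ln (vol V E V) - ln (vol V E S))"
proof (induction n arbitrary: S)
  case 0
  have "Et 0 S = (cond V E S)^2" unfolding Et_def paths_0 Fp_def by simp
  then show ?case using ln_step[OF 0] ln_top[OF 0] by simp
next
  case (Suc n)
  have "Et (Suc n) S \<le> (\<Sum>S'\<in>Pow V. esp_Khat V E S S' * ((cond V E S)^2 + 4 * ln (vol V E V) - 4 * ln (vol V E S')))"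
    unfolding Et_Suc
  proof (rule sum_mono)
    fix S' assume S': "S' \<in> Pow V"
    show "esp_Khat V E S S' * ((cond V E S)^2 * Wt n S' + Et n S') \<le> esp_Khat V E S S' * ((cond V E S)^2 + 4 * ln (vol V E V) - 4 * ln (vol V E S'))"
    proof (cases "S' = {}")
      case True then show ?thesis by (simp add: Khat_empty)
    next
      case False
      then have "(cond V E S)^2 * Wt n S' + Et n S' \<le> (cond V E S)^2 + 4 * ln (vol V E V) - 4 * ln (vol V E S')"
        using Wt_one[of S' n] Suc.IH[of S'] S' by auto
      then show ?thesis by (rule mult_left_mono[OF _ Khat_nn])
    qed
  qed
  also have "\<dots> = (cond V E S)^2 + 4 * ln (vol V E V) - 4 * (\<Sum>S'\<in>Pow V. esp_Khat V E S S' * ln (vol V E S'))"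
    using Khat_sum[OF Suc.prems]
    by (simp add: algebra_simps sum_subtractf sum.distrib sum_distrib_left[symmetric] sum_distrib_right[symmetric])
  also have "\<dots> \<le> 4 * (ln (vol V E V) - ln (vol V E S))"
    using ln_step[OF Suc.prems] by simp
  finally show ?case .
qed


lemma vol_V_gt1: "S0 \<subseteq> V \<Longrightarrow> S0 \<noteq> {} \<Longrightarrow> 1 < vol V E V \<and> 1 \<le> vol V E S0"
proof -
  assume S0: "S0 \<subseteq> V" "S0 \<noteq> {}"
  then obtain x where x: "x \<in> S0" by auto
  then have xV: "x \<in> V" using S0 by auto
  then have "deg V E x > 0" using Dp by auto
  then have "{y\<in>V. E x y} \<noteq> {}" unfolding deg_def by (metis card.empty less_irrefl)
  then obtain y where y: "y \<in> V" "E x y" by auto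
  have xy: "x \<noteq> y" using y Eirr by auto
  have dx: "1 \<le> real (deg V E x)" "1 \<le> real (deg V E y)" using Dp xV y by (auto simp: Suc_le_eq)
  have "vol V E {x, y} \<le> vol V E V" unfolding vol_def using fV xV y by (intro sum_mono2) auto
  moreover have "vol V E {x, y} = real (deg V E x) + real (deg V E y)" unfolding vol_def using xy by simp
  moreover have "real (deg V E x) \<le> vol V E S0" unfolding vol_def
    using x S0 fV finite_subset by (intro member_le_sum) auto
  ultimately show ?thesis using dx by linarith
qed

lemma main_ctx:
  assumes S0: "S0 \<subseteq> V" "S0 \<noteq> {}" and T: "T \<ge> 1" and c: "c > 0"
  shows "vbesp_prob V E S0 T
           (\<lambda>Ss. (MIN j\<in>{0..<T}. cond V E (Ss ! j))
                   \<le> sqrt c * sqrt (4 / real T * ln (vol V E V)))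
         \<ge> 1 - 1 / c"
proof -
  obtain n where Tn: "T = Suc n" using T by (cases T) auto
  define L where "L = ln (vol V E V)"
  have L: "0 < L" unfolding L_def using vol_V_gt1[OF S0] by simp
  have lS0: "0 \<le> ln (vol V E S0)" using vol_V_gt1[OF S0] by simp
  define B where "B = sqrt c * sqrt (4 / real T * L)"
  define Pr where "Pr = (\<lambda>Ss. (MIN j\<in>{0..<T}. cond V E (Ss ! j)) \<le> B)"
  have B0: "0 \<le> B" unfolding B_def using c L by simp
  have B2: "real T * B^2 = 4 * c * L" unfolding B_def using c L T by (simp add: power_mult_distrib)
  have key: "4 * c * L < Fp n Ss" if "\<not> Pr Ss" for Ss
  proof -
    have "B < (MIN j\<in>{0..<T}. cond V E (Ss ! j))" using that unfolding Pr_def by simp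
    then have "\<forall>j\<in>{0..<T}. B < cond V E (Ss ! j)" using T by (simp add: Min_gr_iff)
    then have "\<forall>j\<in>{..<Suc n}. B^2 < (cond V E (Ss ! j))^2" using B0 Tn by (auto intro: power_strict_mono)
    then have "(\<Sum>j<Suc n. B^2) < Fp n Ss" unfolding Fp_def by (intro sum_strict_mono) auto
    then show ?thesis using B2 Tn by simp
  qed
  have prob: "vbesp_prob V E S0 T Pr = (\<Sum>xs\<in>paths n. if Pr (S0 # xs) then pw (S0 # xs) else 0)"
    unfolding vbesp_prob_def paths_def Tn by simp
  have one: "1 = vbesp_prob V E S0 T Pr + (\<Sum>xs\<in>paths n. if Pr (S0 # xs) then 0 else pw (S0 # xs))"
    unfolding prob using Wt_one[OF S0, of n] unfolding Wt_def
    by (simp add: sum.distrib[symmetric] if_distrib cong: if_cong)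
  have cL: "0 < 4 * c * L" using c L by simp
  have "(\<Sum>xs\<in>paths n. if Pr (S0 # xs) then 0 else pw (S0 # xs)) \<le> (\<Sum>xs\<in>paths n. pw (S0 # xs) * Fp n (S0 # xs) / (4 * c * L))"
  proof (rule sum_mono)
    fix xs assume "xs \<in> paths n"
    show "(if Pr (S0 # xs) then 0 else pw (S0 # xs)) \<le> pw (S0 # xs) * Fp n (S0 # xs) / (4 * c * L)"
    proof (cases "Pr (S0 # xs)")
      case True
      then show ?thesis using pw_nn Fp_nn cL by simp
    next
      case False
      then have "1 \<le> Fp n (S0 # xs) / (4 * c * L)" using key[OF False] cL by simp
      then have "pw (S0 # xs) * 1 \<le> pw (S0 # xs) * (Fp n (S0 # xs) / (4 * c * L))"
        by (rule mult_left_mono[OF _ pw_nn])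
      then show ?thesis using False by simp
    qed
  qed
  also have "\<dots> = Et n S0 / (4 * c * L)" unfolding Et_def by (simp add: sum_divide_distrib)
  also have "\<dots> \<le> (4 * L) / (4 * c * L)"
    using Et_bound[OF S0, of n] lS0 cL unfolding L_def[symmetric] by (intro divide_right_mono) auto
  also have "\<dots> = 1 / c" using L by simp
  finally have "vbesp_prob V E S0 T Pr \<ge> 1 - 1 / c" using one by linarith
  then show ?thesis unfolding Pr_def B_def L_def .
qed

end

theorem corollary1:
  fixes V :: "'a set" and E :: "'a \<Rightarrow> 'a \<Rightarrow> bool" and S0 :: "'a set"
    and T :: nat and c :: real
  assumes "simple_graph V E"
    and "\<forall>x\<in>V. deg V E x > 0"
    and "S0 \<subseteq> V" and "S0 \<noteq> {}"
    and "T \<ge> 1" and "c > 0"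
  shows "vbesp_prob V E S0 T
           (\<lambda>Ss. (MIN j\<in>{0..<T}. cond V E (Ss ! j))
                   \<le> sqrt c * sqrt (4 / real T * ln (vol V E V)))
         \<ge> 1 - 1 / c"
  by (rule main_ctx[OF assms])

end
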